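(* Let $r,R>0$, $N\in\mathbb{N}$, $d\ge N$, and define $f_{N,r}:B_R(0)\to\mathbb{R}$ by $f_{N,r}(x)=\max_{i\in[N]}\{x_i-4r\cdot i\}$. Then: (1) $f_{N,r}$ is an $r$-robust zero-chain; (2) for every $x\in B_R(0)$ with $i_r^+(x)\le N$, $f_{N,r}(x)-\inf_{z\in B_R(0)}f_{N,r}(z)\ge\frac{R}{\sqrt N}-4Nr$; (3) $f_{N,r}$ is convex and $1$-Lipschitz (in the Euclidean norm).
   Context: All norms are Euclidean and $B_\rho(\bar x)=\{x\in\mathbb{R}^d:\|x-\bar x\|_2\le\rho\}$. For $x\in\mathbb{R}^d$, $i_r^+(x)=\min\{i\in[d]: |x_j|\le r\text{ for all }j\ge i\}$, with $i_r^+(x)=d+1$ if $|x_d|>r$. A function $f:B_R(0)\to\mathbb{R}$ is an $r$-robust zero-chain if for every $\bar x\in\mathbb{R}^d$ and every $x\in B_r(\bar x)\cap B_R(0)$, $f(x)=f(x_1,\ldots,x_{i_r^+(\bar x)},0,\ldots,0)$ (interpreted as $f(x)$ when $i_r^+(\bar x)=d+1$). *)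

theory Defs
  imports Complex_Main
begin

text \<open>Vectors of R^d are represented as functions nat => real supported on {1..d}
  (coordinates x 1, ..., x d).\<close>

definition Rd :: "nat \<Rightarrow> (nat \<Rightarrow> real) set" where
  "Rd d = {x. \<forall>i. i \<notin> {1..d} \<longrightarrow> x i = 0}"

definition enorm :: "nat \<Rightarrow> (nat \<Rightarrow> real) \<Rightarrow> real" where
  "enorm d x = sqrt (\<Sum>i=1..d. (x i)\<^sup>2)"

definition Bd :: "nat \<Rightarrow> (nat \<Rightarrow> real) \<Rightarrow> real \<Rightarrow> (nat \<Rightarrow> real) set" where
  "Bd d c \<rho> = {x \<in> Rd d. enorm d (\<lambda>i. x i - c i) \<le> \<rho>}"

definition iplus :: "nat \<Rightarrow> real \<Rightarrow> (nat \<Rightarrow> real) \<Rightarrow> nat" where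
  "iplus d r x = (LEAST i. i \<in> {1..d+1} \<and> (\<forall>j\<in>{i..d}. \<bar>x j\<bar> \<le> r))"

definition trunc :: "nat \<Rightarrow> (nat \<Rightarrow> real) \<Rightarrow> (nat \<Rightarrow> real)" where
  "trunc k x = (\<lambda>j. if j \<le> k then x j else 0)"

definition robust_zero_chain ::
  "nat \<Rightarrow> real \<Rightarrow> real \<Rightarrow> ((nat \<Rightarrow> real) \<Rightarrow> real) \<Rightarrow> bool" where
  "robust_zero_chain d r R f \<longleftrightarrow>
     (\<forall>xbar \<in> Rd d. \<forall>x \<in> Bd d xbar r \<inter> Bd d (\<lambda>_. 0) R.
        f x = f (trunc (iplus d r xbar) x))"

definition fNr :: "nat \<Rightarrow> real \<Rightarrow> (nat \<Rightarrow> real) \<Rightarrow> real" where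
  "fNr N r x = Max ((\<lambda>i. x i - 4 * r * real i) ` {1..N})"

end

theory Submission
  imports Defs
begin

lemma fNr_ge:
  assumes "i \<in> {1..N}"
  shows "x i - 4 * r * real i \<le> fNr N r x"
  unfolding fNr_def using assms by (intro Max_ge) auto

lemma fNr_le_iff:
  assumes "N \<ge> 1"
  shows "fNr N r x \<le> c \<longleftrightarrow> (\<forall>i\<in>{1..N}. x i - 4 * r * real i \<le> c)"
  unfolding fNr_def using assms by (subst Max_le_iff) auto

lemma fNr_in:
  assumes "N \<ge> 1"
  obtains i where "i \<in> {1..N}" "fNr N r x = x i - 4 * r * real i"
proof -
  have "fNr N r x \<in> (\<lambda>i. x i - 4 * r * real i) ` {1..N}"
    unfolding fNr_def using assms by (intro Max_in) auto
  then show ?thesis using that by auto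
qed

lemma coord_le_enorm:
  assumes "i \<in> {1..d}"
  shows "\<bar>x i\<bar> \<le> enorm d x"
proof -
  have "(x i)\<^sup>2 \<le> (\<Sum>i=1..d. (x i)\<^sup>2)"
    using assms by (intro member_le_sum) auto
  hence "sqrt ((x i)\<^sup>2) \<le> enorm d x" unfolding enorm_def by (rule real_sqrt_le_mono)
  thus ?thesis by simp
qed

lemma fNr_lip1:
  assumes "N \<ge> 1" "N \<le> d"
  shows "fNr N r x \<le> fNr N r y + enorm d (\<lambda>i. x i - y i)"
proof -
  obtain i where i: "i \<in> {1..N}" "fNr N r x = x i - 4 * r * real i" using fNr_in assms(1) by blast
  have "\<bar>x i - y i\<bar> \<le> enorm d (\<lambda>i. x i - y i)"
    using coord_le_enorm[of i d "\<lambda>i. x i - y i"] i assms by auto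
  moreover have "y i - 4 * r * real i \<le> fNr N r y" using fNr_ge i by blast
  ultimately show ?thesis using i by linarith
qed

lemma iplus_props:
  "iplus d r xb \<in> {1..d+1} \<and> (\<forall>j\<in>{iplus d r xb..d}. \<bar>xb j\<bar> \<le> r)"
  unfolding iplus_def
  by (rule LeastI[of _ "d+1"]) auto

theorem lemma14:
  fixes r R :: real and N d :: nat
  assumes "r > 0" and "R > 0" and "N \<ge> 1" and "d \<ge> N"
  shows "robust_zero_chain d r R (fNr N r)
    \<and> (\<forall>x \<in> Bd d (\<lambda>_. 0) R. iplus d r x \<le> N \<longrightarrow>
          fNr N r x - (INF z \<in> Bd d (\<lambda>_. 0) R. fNr N r z) \<ge> R / sqrt (real N) - 4 * real N * r)
    \<and> (\<forall>x \<in> Bd d (\<lambda>_. 0) R. \<forall>y \<in> Bd d (\<lambda>_. 0) R. \<forall>t::real. 0 \<le> t \<and> t \<le> 1 \<longrightarrow>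
          fNr N r (\<lambda>i. (1 - t) * x i + t * y i) \<le> (1 - t) * fNr N r x + t * fNr N r y)
    \<and> (\<forall>x \<in> Bd d (\<lambda>_. 0) R. \<forall>y \<in> Bd d (\<lambda>_. 0) R.
          \<bar>fNr N r x - fNr N r y\<bar> \<le> enorm d (\<lambda>i. x i - y i))"
proof (intro conjI)
  show "robust_zero_chain d r R (fNr N r)"
    unfolding robust_zero_chain_def
  proof (intro ballI)
    fix xb x assume xb: "xb \<in> Rd d" and x: "x \<in> Bd d xb r \<inter> Bd d (\<lambda>_. 0) R"
    define k where "k = iplus d r xb"
    have k: "k \<in> {1..d+1}" "\<forall>j\<in>{k..d}. \<bar>xb j\<bar> \<le> r"
      using iplus_props[of d r xb] unfolding k_def by auto
    have xn: "enorm d (\<lambda>i. x i - xb i) \<le> r" using x unfolding Bd_def by auto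
    have small: "\<bar>x j\<bar> \<le> 2 * r" if "j \<in> {k..d}" for j
    proof -
      have "\<bar>x j - xb j\<bar> \<le> r" using coord_le_enorm[of j d "\<lambda>i. x i - xb i"] xn that k(1) by auto
      moreover have "\<bar>xb j\<bar> \<le> r" using k(2) that by blast
      ultimately show ?thesis by linarith
    qed
    show "fNr N r x = fNr N r (trunc k x)"
    proof (cases "N \<le> k")
      case True
      have "(\<lambda>i. x i - 4 * r * real i) ` {1..N} = (\<lambda>i. trunc k x i - 4 * r * real i) ` {1..N}"
        using True by (intro image_cong) (auto simp: trunc_def)
      thus ?thesis unfolding fNr_def by simp
    next
      case False
      hence kN: "k < N" "k \<ge> 1" "k \<le> d" using k assms by auto
      have xk: "x k \<ge> - 2 * r" using small[of k] kN by auto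
      have k1: "k \<in> {1..N}" using kN by auto
      have big: "4 * r * real i \<ge> 4 * r * real k + 4 * r" if "i > k" for i
      proof -
        have "real i \<ge> real k + 1" using that by auto
        hence "r * real i \<ge> r * (real k + 1)" using assms(1) by (intro mult_left_mono) auto
        thus ?thesis by (simp add: algebra_simps)
      qed
      have A: "fNr N r x \<le> fNr N r (trunc k x)"
        unfolding fNr_le_iff[OF assms(3)]
      proof
        fix i assume i: "i \<in> {1..N}"
        show "x i - 4 * r * real i \<le> fNr N r (trunc k x)"
        proof (cases "i \<le> k")
          case True
          thus ?thesis using fNr_ge[OF i, of "trunc k x" r] by (simp add: trunc_def)
        next
          case False
          have "\<bar>x i\<bar> \<le> 2 * r" using small[of i] i False assms by auto
          moreover have "trunc k x k - 4 * r * real k \<le> fNr N r (trunc k x)" using fNr_ge[OF k1] .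
          ultimately show ?thesis using big[of i] False xk by (auto simp: trunc_def)
        qed
      qed
      have B: "fNr N r (trunc k x) \<le> fNr N r x"
        unfolding fNr_le_iff[OF assms(3)]
      proof
        fix i assume i: "i \<in> {1..N}"
        show "trunc k x i - 4 * r * real i \<le> fNr N r x"
        proof (cases "i \<le> k")
          case True
          thus ?thesis using fNr_ge[OF i, of x r] by (simp add: trunc_def)
        next
          case False
          have "x k - 4 * r * real k \<le> fNr N r x" using fNr_ge[OF k1] .
          thus ?thesis using big[of i] False xk assms(1) by (auto simp: trunc_def)
        qed
      qed
      show ?thesis using A B by simp
    qed
  qed
next
  show "\<forall>x \<in> Bd d (\<lambda>_. 0) R. iplus d r x \<le> N \<longrightarrow>
          fNr N r x - (INF z \<in> Bd d (\<lambda>_. 0) R. fNr N r z) \<ge> R / sqrt (real N) - 4 * real N * r"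
  proof (intro ballI impI)
    fix x assume x: "x \<in> Bd d (\<lambda>_. 0) R" and ip: "iplus d r x \<le> N"
    have "\<bar>x N\<bar> \<le> r" using iplus_props[of d r x] ip assms by auto
    hence fx: "fNr N r x \<ge> - r - 4 * r * real N"
      using fNr_ge[of N N x r] assms by auto
    define z where "z = (\<lambda>i. if i \<in> {1..N} then - R / sqrt (real N) else 0)"
    have sN: "sqrt (real N) > 0" using assms by auto
    have "(\<Sum>i=1..d. (z i)\<^sup>2) = (\<Sum>i\<in>{1..N}. (R / sqrt (real N))\<^sup>2)"
      using assms by (intro sum.mono_neutral_cong_right) (auto simp: z_def)
    also have "\<dots> = R\<^sup>2" using sN by (simp add: power_divide)
    finally have "enorm d z = R" unfolding enorm_def using assms by simp
    hence zB: "z \<in> Bd d (\<lambda>_. 0) R" unfolding Bd_def Rd_def z_def using assms by auto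
    have fz: "fNr N r z \<le> - R / sqrt (real N) - 4 * r"
      unfolding fNr_le_iff[OF assms(3)]
    proof
      fix i assume i: "i \<in> {1..N}"
      have "r * real i \<ge> r * 1" using i assms(1) by (intro mult_left_mono) auto
      thus "z i - 4 * r * real i \<le> - R / sqrt (real N) - 4 * r" using i by (simp add: z_def)
    qed
    have bdd: "bdd_below (fNr N r ` Bd d (\<lambda>_. 0) R)"
    proof (rule bdd_belowI2[of _ "- R - 4 * r"])
      fix w assume w: "w \<in> Bd d (\<lambda>_. 0) R"
      have "\<bar>w 1\<bar> \<le> R" using coord_le_enorm[of 1 d w] w assms unfolding Bd_def by auto
      moreover have "w 1 - 4 * r * real (1::nat) \<le> fNr N r w" using fNr_ge[of 1 N] assms by auto
      ultimately show "- R - 4 * r \<le> fNr N r w" by auto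
    qed
    have "(INF z \<in> Bd d (\<lambda>_. 0) R. fNr N r z) \<le> fNr N r z"
      using bdd zB by (rule cINF_lower)
    moreover have "r \<le> 4 * r" using assms by auto
    ultimately show "fNr N r x - (INF z \<in> Bd d (\<lambda>_. 0) R. fNr N r z) \<ge> R / sqrt (real N) - 4 * real N * r"
      using fx fz by (simp add: algebra_simps)
  qed
next
  show "\<forall>x \<in> Bd d (\<lambda>_. 0) R. \<forall>y \<in> Bd d (\<lambda>_. 0) R. \<forall>t::real. 0 \<le> t \<and> t \<le> 1 \<longrightarrow>
          fNr N r (\<lambda>i. (1 - t) * x i + t * y i) \<le> (1 - t) * fNr N r x + t * fNr N r y"
  proof (intro ballI allI impI)
    fix x y and t :: real assume t: "0 \<le> t \<and> t \<le> 1"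
    show "fNr N r (\<lambda>i. (1 - t) * x i + t * y i) \<le> (1 - t) * fNr N r x + t * fNr N r y"
      unfolding fNr_le_iff[OF assms(3)]
    proof
      fix i assume i: "i \<in> {1..N}"
      have "(1 - t) * (x i - 4 * r * real i) \<le> (1 - t) * fNr N r x"
        using t fNr_ge[OF i] by (intro mult_left_mono) auto
      moreover have "t * (y i - 4 * r * real i) \<le> t * fNr N r y"
        using t fNr_ge[OF i] by (intro mult_left_mono) auto
      ultimately show "(1 - t) * x i + t * y i - 4 * r * real i \<le> (1 - t) * fNr N r x + t * fNr N r y"
        by (simp add: algebra_simps)
    qed
  qed
next
  show "\<forall>x \<in> Bd d (\<lambda>_. 0) R. \<forall>y \<in> Bd d (\<lambda>_. 0) R.
          \<bar>fNr N r x - fNr N r y\<bar> \<le> enorm d (\<lambda>i. x i - y i)"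
  proof (intro ballI)
    fix x y :: "nat \<Rightarrow> real"
    have "enorm d (\<lambda>i. y i - x i) = enorm d (\<lambda>i. x i - y i)"
      unfolding enorm_def by (simp add: power2_commute)
    thus "\<bar>fNr N r x - fNr N r y\<bar> \<le> enorm d (\<lambda>i. x i - y i)"
      using fNr_lip1[OF assms(3,4), of r x y] fNr_lip1[OF assms(3,4), of r y x] by auto
  qed
qed

end
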